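(* Let $r_n$ ($n\ge0$) denote the parity of the number of runs of $1$'s in the binary representation of $n$. Then the infinite word $r_0r_1r_2\cdots$ contains no fifth power: there is no nonempty finite word $X$ over $\{0,1\}$ such that $XXXXX$ occurs as a block of consecutive terms $r_a r_{a+1}\cdots r_{a+5|X|-1}$ for some $a\ge0$.
   Context: A run of $1$'s in the binary representation of $n$ is a maximal block of consecutive binary digits equal to $1$; parity means the number modulo $2$. *)

theory Defs
  imports Main
begin

definition bdig :: "nat \<Rightarrow> nat \<Rightarrow> nat" where
  "bdig n i = (n div 2 ^ i) mod 2"

text \<open>Number of runs (maximal blocks) of 1's in the binary representation of n:
  count the positions where a run starts when reading from the least significant
  digit, i.e. digit i is 1 and either i = 0 or digit i-1 is 0.  All positions
  with a 1 digit are below n, so restricting to i < n loses nothing.\<close>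
definition num_runs :: "nat \<Rightarrow> nat" where
  "num_runs n = card {i. i < n \<and> bdig n i = 1 \<and> (i = 0 \<or> bdig n (i - 1) = 0)}"

definition r :: "nat \<Rightarrow> nat" where
  "r n = num_runs n mod 2"

end

theory Submission
  imports Defs
begin

definition S :: "nat \<Rightarrow> nat set" where
  "S n = {i. bdig n i = 1 \<and> (i = 0 \<or> bdig n (i - 1) = 0)}"

lemma bdig_lt: "bdig n i = 1 \<Longrightarrow> i < n"
proof -
  assume "bdig n i = 1"
  hence "n div 2^i \<noteq> 0" unfolding bdig_def by auto
  hence "2^i \<le> n" by (simp add: div_eq_0_iff)
  moreover have "i < 2^i" by simp
  ultimately show ?thesis by linarith
qed

lemma num_runs_S: "num_runs n = card (S n)"
  unfolding num_runs_def S_def by (metis (lifting) bdig_lt)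

lemma finS: "finite (S n)"
proof -
  have "S n \<subseteq> {..<n}" unfolding S_def using bdig_lt by auto
  thus ?thesis using finite_subset by blast
qed

lemma bdig_even0: "bdig (2*n) 0 = 0" by (simp add: bdig_def)
lemma bdig_odd0: "bdig (2*n+1) 0 = 1" by (simp add: bdig_def)
lemma bdig_odd0': "bdig (Suc (2*n)) 0 = 1" by (simp add: bdig_def)
lemma bdig_evenS: "bdig (2*n) (Suc j) = bdig n j"
  by (simp add: bdig_def div_mult2_eq)
lemma bdig_oddS: "bdig (2*n+1) (Suc j) = bdig n j"
  proof -
  have "(2*n+1) div 2 = n" by simp
  thus ?thesis unfolding bdig_def by (simp add: div_mult2_eq)
qed

lemma bdig_oddS': "bdig (Suc (2*n)) (Suc j) = bdig n j"
  using bdig_oddS by simp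

lemma S_even: "S (2*n) = Suc ` S n"
proof (rule set_eqI)
  fix i show "i \<in> S (2*n) \<longleftrightarrow> i \<in> Suc ` S n"
  proof (cases i)
    case 0 thus ?thesis by (auto simp: S_def bdig_even0)
  next
    case (Suc j)
    show ?thesis
    proof (cases j)
      case 0 thus ?thesis using Suc by (auto simp: S_def bdig_even0 bdig_evenS)
    next
      case (Suc k) thus ?thesis using \<open>i = Suc j\<close> by (auto simp: S_def bdig_evenS)
    qed
  qed
qed

lemma S_odd: "S (2*n+1) = insert 0 (Suc ` (S n - {0}))"
proof (rule set_eqI)
  fix i show "i \<in> S (2*n+1) \<longleftrightarrow> i \<in> insert 0 (Suc ` (S n - {0}))"
  proof (cases i)
    case 0 thus ?thesis by (auto simp: S_def bdig_odd0 bdig_odd0')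
  next
    case (Suc j)
    show ?thesis
    proof (cases j)
      case 0 thus ?thesis using Suc by (auto simp: S_def bdig_odd0 bdig_odd0' bdig_oddS bdig_oddS')
    next
      case (Suc k) thus ?thesis using \<open>i = Suc j\<close> by (auto simp: S_def bdig_oddS bdig_oddS')
    qed
  qed
qed

lemma zero_S: "0 \<in> S n \<longleftrightarrow> odd n"
  by (auto simp: S_def bdig_def odd_iff_mod_2_eq_one)

lemma r_even: "r (2*n) = r n"
  unfolding r_def num_runs_S S_even by (simp add: card_image)

lemma r_odd: "r (2*n+1) = (if even n then (r n + 1) mod 2 else r n)"
proof -
  have c: "card (S (2*n+1)) = Suc (card (S n - {0}))"
    unfolding S_odd by (simp add: card_image finS)
  show ?thesis
  proof (cases "even n")
    case True
    hence "0 \<notin> S n" using zero_S by auto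
    thus ?thesis using True c unfolding r_def num_runs_S by (simp add: mod_Suc_eq)
  next
    case False
    hence "0 \<in> S n" using zero_S by auto
    hence "card (S n - {0}) + 1 = card (S n)" using finS
      by (metis One_nat_def Suc_pred card_Diff_singleton card_gt_0_iff empty_iff add.commute plus_1_eq_Suc)
    thus ?thesis using False c unfolding r_def num_runs_S by simp
  qed
qed

lemma rle: "r n \<le> 1" unfolding r_def by simp

lemma diff_pair: "(r (2*m) = r (2*m+1)) \<longleftrightarrow> odd m"
  using r_even[of m] r_odd[of m] rle[of m] by (cases "r m") auto

lemma key: "0 < p \<Longrightarrow> \<forall>j<4*p. r (a+j) = r (a+j+p) \<Longrightarrow> False"
proof (induction p arbitrary: a rule: less_induct)
  case (less p)
  show ?case
  proof (cases "even p")
    case True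
    then obtain q where q: "p = 2*q" by auto
    have "q < p" "0 < q" using q less.prems by auto
    define a' where "a' = (a+1) div 2"
    have "\<forall>j<4*q. r (a'+j) = r (a'+j+q)"
    proof (intro allI impI)
      fix j assume j: "j < 4*q"
      define J where "J = 2*a' + 2*j - a"
      have aJ: "a + J = 2*(a'+j)" unfolding J_def a'_def by auto
      have "J < 4*p" unfolding J_def a'_def using j q by auto
      hence "r (a+J) = r (a+J+p)" using less.prems by auto
      moreover have "a+J+p = 2*(a'+j+q)" using aJ q by simp
      ultimately show "r (a'+j) = r (a'+j+q)" using aJ r_even by metis
    qed
    thus False using less.IH[OF \<open>q<p\<close> \<open>0<q\<close>] by blast
  next
    case False
    obtain m where m: "2*m = a \<or> 2*m = a+1" by (metis dvd_triv_left even_Suc oddE Suc_eq_plus1 evenE)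
    define d where "d = 2*m - a"
    have d: "d \<le> 1" "2*m = a + d" unfolding d_def using m by auto
    have e1: "r (a+d) = r (a+d+p)" using less.prems d by auto
    have e2: "r (a+(d+p)) = r (a+(d+p)+p)" using less.prems d by auto
    have "d+1 < 4*p" using d less.prems by linarith
    hence e3: "r (a+(d+1)) = r (a+(d+1)+p)" using less.prems by blast
    have "d+1+p < 4*p" using d less.prems by linarith
    hence e4: "r (a+(d+1+p)) = r (a+(d+1+p)+p)" using less.prems by blast
    have A: "r (2*m) = r (2*(m+p))"
    proof -
      have "2*m = a+d" "2*(m+p) = a+(d+p)+p" "a+d+p = a+(d+p)" using d by auto
      thus ?thesis using e1 e2 by metis
    qed
    have B: "r (2*m+1) = r (2*(m+p)+1)"
    proof -
      have "2*m+1 = a+(d+1)" "2*(m+p)+1 = a+(d+1+p)+p" "a+(d+1)+p = a+(d+1+p)" using d by auto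
      thus ?thesis using e3 e4 by metis
    qed
    have "odd m \<longleftrightarrow> odd (m+p)" using diff_pair[of m] diff_pair[of "m+p"] A B by simp
    thus False using False by simp
  qed
qed

theorem theorem6:
  shows "\<not> (\<exists>X :: nat list. \<exists>a :: nat. X \<noteq> [] \<and> set X \<subseteq> {0, 1} \<and>
            (\<forall>j < 5 * length X. r (a + j) = X ! (j mod length X)))"
proof
  assume "\<exists>X :: nat list. \<exists>a :: nat. X \<noteq> [] \<and> set X \<subseteq> {0, 1} \<and>
            (\<forall>j < 5 * length X. r (a + j) = X ! (j mod length X))"
  then obtain X a where X: "X \<noteq> []" and h: "\<forall>j < 5 * length X. r (a + j) = X ! (j mod length X)"
    by blast
  have "\<forall>j<4*length X. r (a+j) = r (a+j+length X)"
  proof (intro allI impI)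
    fix j assume j: "j < 4 * length X"
    have "r (a+j) = X ! (j mod length X)" using h j by auto
    moreover have "r (a+(j+length X)) = X ! ((j + length X) mod length X)" using h j by auto
    ultimately show "r (a+j) = r (a+j+length X)" by (simp add: add.assoc)
  qed
  thus False using key X by blast
qed

end
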